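(* Let $a,n\in\mathbb{N}$, let $k_1,\ldots,k_n\in\mathbb{N}$, let $f_1,\ldots,f_n$, $g_1,\ldots,g_n$, $h_1,\ldots,h_n$ be arbitrary arithmetic functions, and let $\omega$ be a completely multiplicative function. Then $$U_{\omega}^{(a)}(k_1,\ldots,k_n)=\sum_{d_1|k_1,\ldots,d_n|k_n}\omega(M)^a\Bigl(\prod_{i=1}^n f_i(d_i)\,g_i\Bigl(\frac{k_i}{d_i}\Bigr)\Bigr)\sum_{\ell=1}^{L^a}\omega(\ell)\prod_{i=1}^n h_i\Bigl(\Bigl(\frac{M}{d_i}\Bigr)^a\ell\Bigr),$$ where in each summand $M=\operatorname{lcm}(d_1,\ldots,d_n)$ and $L=K/M$. If in addition $h_1,\ldots,h_n$ are completely multiplicative, then $$U_{\omega}^{(a)}(k_1,\ldots,k_n)=\sum_{d_1|k_1,\ldots,d_n|k_n}\omega(M)^a\Bigl(\prod_{i=1}^n f_i(d_i)\,g_i\Bigl(\frac{k_i}{d_i}\Bigr)h_i\Bigl(\frac{M}{d_i}\Bigr)^a\Bigr)\sum_{\ell=1}^{L^a}\omega(\ell)\prod_{i=1}^n h_i(\ell).$$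
   Context: An arithmetic function is a map $\mathbb{N}\to\mathbb{C}$. A function $\omega$ is completely multiplicative if $\omega(1)=1$ and $\omega(mn)=\omega(m)\omega(n)$ for all $m,n\in\mathbb{N}$. For $a\in\mathbb{N}$ and arithmetic functions $f,g,h$, the generalized Anderson–Apostol sum is $s^{(a)}_{f,g,h}(k,j)=\sum_{d|k,\ d^a|j} f(d)\,g(k/d)\,h(j/d^a)$ for $k,j\in\mathbb{N}$. Given $k_1,\ldots,k_n\in\mathbb{N}$, put $K=\operatorname{lcm}(k_1,\ldots,k_n)$ and $U_{\omega}^{(a)}(k_1,\ldots,k_n)=\sum_{j=1}^{K^a}\omega(j)\prod_{i=1}^n s^{(a)}_{f_i,g_i,h_i}(k_i,j)$. *)

theory Defs
  imports Complex_Main "HOL-Library.FuncSet"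
begin

text \<open>Arithmetic functions are maps on the positive integers; we model them as
  functions nat => complex whose value at 0 is irrelevant.\<close>

definition compl_mult :: "(nat \<Rightarrow> complex) \<Rightarrow> bool" where
  "compl_mult w \<longleftrightarrow> w 1 = 1 \<and> (\<forall>m n. 0 < m \<longrightarrow> 0 < n \<longrightarrow> w (m * n) = w m * w n)"

definition AA_sum :: "nat \<Rightarrow> (nat \<Rightarrow> complex) \<Rightarrow> (nat \<Rightarrow> complex) \<Rightarrow> (nat \<Rightarrow> complex)
    \<Rightarrow> nat \<Rightarrow> nat \<Rightarrow> complex" where
  "AA_sum a f g h k j = (\<Sum>d\<in>{d. d dvd k \<and> d ^ a dvd j}. f d * g (k div d) * h (j div d ^ a))"

definition U_sum :: "nat \<Rightarrow> nat \<Rightarrow> (nat \<Rightarrow> complex) \<Rightarrow> (nat \<Rightarrow> nat \<Rightarrow> complex)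
    \<Rightarrow> (nat \<Rightarrow> nat \<Rightarrow> complex) \<Rightarrow> (nat \<Rightarrow> nat \<Rightarrow> complex) \<Rightarrow> (nat \<Rightarrow> nat) \<Rightarrow> complex" where
  "U_sum a n \<omega> f g h k =
     (\<Sum>j = 1..(Lcm (k ` {1..n})) ^ a. \<omega> j * (\<Prod>i = 1..n. AA_sum a (f i) (g i) (h i) (k i) j))"

end

theory Submission
  imports Defs
begin

lemma cm_pow: "compl_mult w \<Longrightarrow> (0::nat) < x \<Longrightarrow> w (x ^ a) = w x ^ a"
  by (induction a) (auto simp: compl_mult_def)

lemma cm_mult: "compl_mult w \<Longrightarrow> (0::nat) < x \<Longrightarrow> 0 < y \<Longrightarrow> w (x * y) = w x * w y"
  by (auto simp: compl_mult_def)

lemma lcm_pow_nat: "lcm ((x::nat) ^ a) (y ^ a) = lcm x y ^ a"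
proof (cases "gcd x y = 0")
  case True then show ?thesis by (cases a) auto
next
  case False
  have "lcm (x ^ a) (y ^ a) * gcd (x ^ a) (y ^ a) = (x * y) ^ a"
    by (metis prod_gcd_lcm_nat mult.commute power_mult_distrib)
  also have "\<dots> = (lcm x y * gcd x y) ^ a"
    using prod_gcd_lcm_nat[of x y] by (simp add: mult.commute)
  also have "\<dots> = lcm x y ^ a * gcd x y ^ a" by (rule power_mult_distrib)
  finally have "lcm (x ^ a) (y ^ a) * gcd x y ^ a = lcm x y ^ a * gcd x y ^ a"
    by simp
  then show ?thesis using False by auto
qed

lemma Lcm_pow_nat: "finite I \<Longrightarrow> Lcm ((\<lambda>i. (x i::nat) ^ a) ` I) = Lcm (x ` I) ^ a"
  by (induction I rule: finite_induct) (auto simp: lcm_pow_nat)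

lemma reindex_dvd:
  fixes G :: "nat \<Rightarrow> complex"
  assumes "0 < c"
  shows "(\<Sum>j = 1..c * N. if c dvd j then G j else 0) = (\<Sum>l = 1..N. G (c * l))"
proof -
  have "(\<Sum>j = 1..c * N. if c dvd j then G j else 0) = sum G {j \<in> {1..c*N}. c dvd j}"
    by (subst sum.inter_filter) auto
  also have "{j \<in> {1..c*N}. c dvd j} = (\<lambda>l. c * l) ` {1..N}"
  proof (intro set_eqI iffI)
    fix j assume "j \<in> {j \<in> {1..c*N}. c dvd j}"
    then obtain l where "j = c * l" "1 \<le> c * l" "c * l \<le> c * N" by auto
    then show "j \<in> (\<lambda>l. c * l) ` {1..N}" using assms by (auto intro!: image_eqI[of _ _ l])
  next
    fix j assume "j \<in> (\<lambda>l. c * l) ` {1..N}"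
    then show "j \<in> {j \<in> {1..c*N}. c dvd j}" using assms by auto
  qed
  also have "sum G \<dots> = (\<Sum>l = 1..N. G (c * l))"
    using assms by (subst sum.reindex) (auto simp: inj_on_def)
  finally show ?thesis .
qed

theorem theorem1:
  fixes a n :: nat and k :: "nat \<Rightarrow> nat"
    and f g h :: "nat \<Rightarrow> nat \<Rightarrow> complex" and \<omega> :: "nat \<Rightarrow> complex"
  assumes "a \<ge> 1" and "n \<ge> 1"
    and "\<And>i. i \<in> {1..n} \<Longrightarrow> k i \<ge> 1"
    and "compl_mult \<omega>"
  shows "U_sum a n \<omega> f g h k =
      (\<Sum>d\<in>(PiE {1..n} (\<lambda>i. {e. e dvd k i})).
         \<omega> (Lcm (d ` {1..n})) ^ a *
         (\<Prod>i = 1..n. f i (d i) * g i (k i div d i)) *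
         (\<Sum>l = 1..(Lcm (k ` {1..n}) div Lcm (d ` {1..n})) ^ a.
            \<omega> l * (\<Prod>i = 1..n. h i ((Lcm (d ` {1..n}) div d i) ^ a * l))))
    \<and> ((\<forall>i\<in>{1..n}. compl_mult (h i)) \<longrightarrow>
      U_sum a n \<omega> f g h k =
      (\<Sum>d\<in>(PiE {1..n} (\<lambda>i. {e. e dvd k i})).
         \<omega> (Lcm (d ` {1..n})) ^ a *
         (\<Prod>i = 1..n. f i (d i) * g i (k i div d i) * h i (Lcm (d ` {1..n}) div d i) ^ a) *
         (\<Sum>l = 1..(Lcm (k ` {1..n}) div Lcm (d ` {1..n})) ^ a.
            \<omega> l * (\<Prod>i = 1..n. h i l))))"
proof -
  define I where "I = {1..n}"
  define D where "D = PiE I (\<lambda>i. {e. e dvd k i})"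
  define K where "K = Lcm (k ` I)"
  define F where "F i e j = f i e * g i (k i div e) * h i (j div e ^ a)" for i e j
  have finB: "finite {e. e dvd k i}" if "i \<in> I" for i
  proof -
    have "0 < k i" using assms(3)[of i] that I_def by auto
    then show ?thesis by (intro finite_divisors_nat)
  qed
  have finD: "finite D" unfolding D_def using finB by (intro finite_PiE) (auto simp: I_def)
  have Dpos: "0 < d i" if "d \<in> D" "i \<in> I" for d i
  proof -
    have "d i dvd k i" using that unfolding D_def by (auto simp: PiE_iff)
    moreover have "k i \<noteq> 0" using that assms(3)[of i] unfolding I_def by auto
    ultimately show ?thesis by (metis dvd_0_left_iff Nat.neq0_conv)
  qed
  have Mpos: "0 < Lcm (d ` I)" if "d \<in> D" for d
  proof -
    have "0 \<notin> d ` I" using Dpos[OF that] by force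
    then have "Lcm (d ` I) \<noteq> 0" unfolding I_def by (simp add: Lcm_0_iff_nat)
    then show ?thesis by simp
  qed
  have MdvdK: "Lcm (d ` I) dvd K" if "d \<in> D" for d
  proof (rule Lcm_least)
    fix m assume "m \<in> d ` I"
    then obtain i where i: "i \<in> I" "m = d i" by auto
    have "d i dvd k i" using that i unfolding D_def by (auto simp: PiE_iff)
    moreover have "k i dvd K" using i unfolding K_def by auto
    ultimately show "m dvd K" using i dvd_trans by blast
  qed
  have dvdM: "d i dvd Lcm (d ` I)" if "i \<in> I" for d :: "nat \<Rightarrow> nat" and i using that by (intro dvd_Lcm imageI)
  have alldvd: "(\<forall>i\<in>I. d i ^ a dvd j) \<longleftrightarrow> Lcm (d ` I) ^ a dvd j" for d :: "nat \<Rightarrow> nat" and j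
  proof
    assume "\<forall>i\<in>I. d i ^ a dvd j"
    then have "Lcm ((\<lambda>i. d i ^ a) ` I) dvd j" by (auto intro: Lcm_least)
    then show "Lcm (d ` I) ^ a dvd j" using Lcm_pow_nat[of I d a] I_def by simp
  next
    assume "Lcm (d ` I) ^ a dvd j"
    then show "\<forall>i\<in>I. d i ^ a dvd j" using dvdM
      by (meson dvd_power_same dvd_trans)
  qed
  have step1: "U_sum a n \<omega> f g h k =
      (\<Sum>d\<in>D. \<Sum>j = 1..K ^ a. if Lcm (d ` I) ^ a dvd j then \<omega> j * (\<Prod>i\<in>I. F i (d i) j) else 0)"
  proof -
    have "U_sum a n \<omega> f g h k = (\<Sum>j = 1..K ^ a. \<omega> j * (\<Prod>i\<in>I. \<Sum>e\<in>{e. e dvd k i}.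
            if e ^ a dvd j then F i e j else 0))"
    proof -
      have AA: "AA_sum a (f i) (g i) (h i) (k i) j = (\<Sum>e\<in>{e. e dvd k i}. if e ^ a dvd j then F i e j else 0)"
        if "i \<in> I" for i j
      proof -
        have "{d. d dvd k i \<and> d ^ a dvd j} = {e \<in> {e. e dvd k i}. e ^ a dvd j}" by auto
        then show ?thesis unfolding AA_sum_def F_def
          using sum.inter_filter[OF finB[OF that], of "\<lambda>e. f i e * g i (k i div e) * h i (j div e ^ a)" "\<lambda>e. e ^ a dvd j"]
          by simp
      qed
      show ?thesis unfolding U_sum_def K_def I_def[symmetric]
        by (intro sum.cong prod.cong refl arg_cong2[where f="(*)"] AA)
    qed
    also have "\<dots> = (\<Sum>j = 1..K ^ a. \<Sum>d\<in>D. if Lcm (d ` I) ^ a dvd j then \<omega> j * (\<Prod>i\<in>I. F i (d i) j) else 0)"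
    proof (intro sum.cong refl)
      fix j
      have "(\<Prod>i\<in>I. \<Sum>e\<in>{e. e dvd k i}. if e ^ a dvd j then F i e j else 0)
          = (\<Sum>d\<in>D. \<Prod>i\<in>I. if d i ^ a dvd j then F i (d i) j else 0)"
        unfolding D_def using finB I_def by (subst prod_sum_PiE) auto
      also have "\<dots> = (\<Sum>d\<in>D. if Lcm (d ` I) ^ a dvd j then (\<Prod>i\<in>I. F i (d i) j) else 0)"
      proof (intro sum.cong refl)
        fix d
        show "(\<Prod>i\<in>I. if d i ^ a dvd j then F i (d i) j else 0) =
              (if Lcm (d ` I) ^ a dvd j then (\<Prod>i\<in>I. F i (d i) j) else 0)"
        proof (cases "\<forall>i\<in>I. d i ^ a dvd j")
          case True then show ?thesis using alldvd[of d j] by (auto intro: prod.cong)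
        next
          case False
          then obtain i where "i \<in> I" "\<not> d i ^ a dvd j" by auto
          then show ?thesis using alldvd[of d j] I_def
            by (auto intro!: prod_zero[of I] bexI[of _ i])
        qed
      qed
      finally show "\<omega> j * (\<Prod>i\<in>I. \<Sum>e\<in>{e. e dvd k i}. if e ^ a dvd j then F i e j else 0) =
          (\<Sum>d\<in>D. if Lcm (d ` I) ^ a dvd j then \<omega> j * (\<Prod>i\<in>I. F i (d i) j) else 0)"
        by (auto simp: sum_distrib_left intro!: sum.cong)
    qed
    also have "\<dots> = (\<Sum>d\<in>D. \<Sum>j = 1..K ^ a. if Lcm (d ` I) ^ a dvd j then \<omega> j * (\<Prod>i\<in>I. F i (d i) j) else 0)"
      by (rule sum.swap)
    finally show ?thesis .
  qed
  have step2: "(\<Sum>j = 1..K ^ a. if Lcm (d ` I) ^ a dvd j then \<omega> j * (\<Prod>i\<in>I. F i (d i) j) else 0)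
     = \<omega> (Lcm (d ` I)) ^ a * (\<Prod>i\<in>I. f i (d i) * g i (k i div d i)) *
         (\<Sum>l = 1..(K div Lcm (d ` I)) ^ a. \<omega> l * (\<Prod>i\<in>I. h i ((Lcm (d ` I) div d i) ^ a * l)))"
    if dD: "d \<in> D" for d
  proof -
    define M where "M = Lcm (d ` I)"
    have M0: "0 < M" using Mpos[OF dD] M_def by simp
    have KM: "K ^ a = M ^ a * (K div M) ^ a"
    proof -
      obtain q where q: "K = M * q" using MdvdK[OF dD] M_def by (auto elim: dvdE)
      then have "K div M = q" using M0 by simp
      then show ?thesis using q by (simp add: power_mult_distrib)
    qed
    have "(\<Sum>j = 1..K ^ a. if M ^ a dvd j then \<omega> j * (\<Prod>i\<in>I. F i (d i) j) else 0)
        = (\<Sum>l = 1..(K div M) ^ a. \<omega> (M ^ a * l) * (\<Prod>i\<in>I. F i (d i) (M ^ a * l)))"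
      unfolding KM using M0 by (intro reindex_dvd) simp
    also have "\<dots> = (\<Sum>l = 1..(K div M) ^ a. \<omega> M ^ a * (\<Prod>i\<in>I. f i (d i) * g i (k i div d i)) *
                  (\<omega> l * (\<Prod>i\<in>I. h i ((M div d i) ^ a * l))))"
    proof (intro sum.cong refl)
      fix l assume l: "l \<in> {1..(K div M) ^ a}"
      have w: "\<omega> (M ^ a * l) = \<omega> M ^ a * \<omega> l"
        using l M0 assms(4) by (simp add: cm_mult cm_pow)
      have "(\<Prod>i\<in>I. F i (d i) (M ^ a * l)) = (\<Prod>i\<in>I. f i (d i) * g i (k i div d i) * h i ((M div d i) ^ a * l))"
      proof (intro prod.cong refl)
        fix i assume i: "i \<in> I"
        have di: "0 < d i" using Dpos[OF dD i] .
        obtain e where e: "M = d i * e" using dvdM[OF i, of d] M_def by (auto elim: dvdE)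
        then have e2: "M div d i = e" using di by simp
        have "M ^ a * l = ((M div d i) ^ a * l) * d i ^ a"
          unfolding e2 by (simp add: e power_mult_distrib mult_ac)
        then have "M ^ a * l div d i ^ a = (M div d i) ^ a * l"
          using di by (simp only:) (rule nonzero_mult_div_cancel_right, simp)
        then show "F i (d i) (M ^ a * l) = f i (d i) * g i (k i div d i) * h i ((M div d i) ^ a * l)"
          unfolding F_def by simp
      qed
      note pe = this
      show "\<omega> (M ^ a * l) * (\<Prod>i\<in>I. F i (d i) (M ^ a * l)) = \<omega> M ^ a * (\<Prod>i\<in>I. f i (d i) * g i (k i div d i)) *
                  (\<omega> l * (\<Prod>i\<in>I. h i ((M div d i) ^ a * l)))"
        unfolding w pe by (simp add: prod.distrib mult_ac)
    qed
    also have "\<dots> = \<omega> M ^ a * (\<Prod>i\<in>I. f i (d i) * g i (k i div d i)) *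
         (\<Sum>l = 1..(K div M) ^ a. \<omega> l * (\<Prod>i\<in>I. h i ((M div d i) ^ a * l)))"
      by (simp add: sum_distrib_left)
    finally show ?thesis unfolding M_def .
  qed
  have part1: "U_sum a n \<omega> f g h k = (\<Sum>d\<in>D. \<omega> (Lcm (d ` I)) ^ a * (\<Prod>i\<in>I. f i (d i) * g i (k i div d i)) *
         (\<Sum>l = 1..(K div Lcm (d ` I)) ^ a. \<omega> l * (\<Prod>i\<in>I. h i ((Lcm (d ` I) div d i) ^ a * l))))"
    unfolding step1 by (intro sum.cong refl step2)
  have part2: "U_sum a n \<omega> f g h k = (\<Sum>d\<in>D. \<omega> (Lcm (d ` I)) ^ a *
         (\<Prod>i\<in>I. f i (d i) * g i (k i div d i) * h i (Lcm (d ` I) div d i) ^ a) *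
         (\<Sum>l = 1..(K div Lcm (d ` I)) ^ a. \<omega> l * (\<Prod>i\<in>I. h i l)))"
    if hc: "\<forall>i\<in>I. compl_mult (h i)"
    unfolding part1
  proof (intro sum.cong refl)
    fix d assume dD: "d \<in> D"
    define M where "M = Lcm (d ` I)"
    have "(\<Sum>l = 1..(K div M) ^ a. \<omega> l * (\<Prod>i\<in>I. h i ((M div d i) ^ a * l)))
        = (\<Sum>l = 1..(K div M) ^ a. (\<Prod>i\<in>I. h i (M div d i) ^ a) * (\<omega> l * (\<Prod>i\<in>I. h i l)))"
    proof (intro sum.cong refl)
      fix l assume l: "l \<in> {1..(K div M) ^ a}"
      have "(\<Prod>i\<in>I. h i ((M div d i) ^ a * l)) = (\<Prod>i\<in>I. h i (M div d i) ^ a * h i l)"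
      proof (intro prod.cong refl)
        fix i assume i: "i \<in> I"
        have pos: "0 < M div d i"
          using Mpos[OF dD] Dpos[OF dD i] dvdM[OF i, of d] M_def
          by (metis dvd_div_eq_0_iff Nat.neq0_conv bot_nat_0.not_eq_extremum)
        show "h i ((M div d i) ^ a * l) = h i (M div d i) ^ a * h i l"
          using hc i l pos by (simp add: cm_mult cm_pow)
      qed
      then show "\<omega> l * (\<Prod>i\<in>I. h i ((M div d i) ^ a * l)) = (\<Prod>i\<in>I. h i (M div d i) ^ a) * (\<omega> l * (\<Prod>i\<in>I. h i l))"
        by (simp add: prod.distrib mult_ac)
    qed
    also have "\<dots> = (\<Prod>i\<in>I. h i (M div d i) ^ a) * (\<Sum>l = 1..(K div M) ^ a. \<omega> l * (\<Prod>i\<in>I. h i l))"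
      by (simp add: sum_distrib_left)
    finally show "\<omega> (Lcm (d ` I)) ^ a * (\<Prod>i\<in>I. f i (d i) * g i (k i div d i)) *
         (\<Sum>l = 1..(K div Lcm (d ` I)) ^ a. \<omega> l * (\<Prod>i\<in>I. h i ((Lcm (d ` I) div d i) ^ a * l))) =
         \<omega> (Lcm (d ` I)) ^ a *
         (\<Prod>i\<in>I. f i (d i) * g i (k i div d i) * h i (Lcm (d ` I) div d i) ^ a) *
         (\<Sum>l = 1..(K div Lcm (d ` I)) ^ a. \<omega> l * (\<Prod>i\<in>I. h i l))"
      unfolding M_def[symmetric] by (simp add: prod.distrib mult_ac)
  qed
  show ?thesis using part1 part2 unfolding I_def D_def K_def by blast
qed

end
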